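(* Let $K\subset\mathbb{R}^n$ be a convex body with smooth boundary and let $\gamma$ be a periodic billiard trajectory on $K$. Set $\mathcal{N}=\{\nu(\gamma(t)):t\in\mathcal{B}_\gamma\}$. Then $0\in\mathrm{conv}(\mathcal{N})$ and $h(K:\nu)\le h(\gamma(S^1):\nu)$ for every $\nu\in\mathcal{N}$. In particular $\mathcal{P}(K)\subset\mathcal{P}^+(K)$.
   Context: A convex body is a compact convex set with nonempty interior; $S^1=\mathbb{R}/\mathbb{Z}$; $K$ is regarded as a Riemannian manifold with boundary with the Euclidean metric. A nonconstant continuous $\gamma:S^1\to K$ is a periodic billiard trajectory if there is a finite $\mathcal{B}_\gamma\subset S^1$ with $\ddot\gamma\equiv0$ off $\mathcal{B}_\gamma$ and for each $t\in\mathcal{B}_\gamma$: $\gamma(t)\in\partial K$, $\dot\gamma^+(t)+\dot\gamma^-(t)\in T_{\gamma(t)}\partial K$, $\dot\gamma^+(t)-\dot\gamma^-(t)\in(T_{\gamma(t)}\partial K)^\perp\setminus\{0\}$, where $\dot\gamma^\pm(t)=\lim_{h\to0\pm}\dot\gamma(t+h)$. $\mathcal{P}(K)$ is the set of periodic billiard trajectories on $K$. For $q\in\partial K$, $\nu(q)$ is the outer unit normal. For compact $S$, $h(S:\nu)=\max\{s\cdot\nu:s\in S\}$. $\mathcal{P}^+(K)$ is the set of piecewise linear closed curves $\gamma:S^1\to\mathbb{R}^n$ with $\gamma(S^1)+x\not\subset\mathrm{int}\,K$ for all $x\in\mathbb{R}^n$. *)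

theory Defs
  imports "HOL-Analysis.Analysis"
begin

fun C_k :: "nat \<Rightarrow> 'a::real_normed_vector set \<Rightarrow> ('a \<Rightarrow> real) \<Rightarrow> bool" where
  "C_k 0 U f = continuous_on U f"
| "C_k (Suc k) U f =
     ((\<forall>x\<in>U. f differentiable (at x)) \<and>
      (\<forall>v. C_k k U (\<lambda>x. frechet_derivative f (at x) v)))"

definition smooth_on :: "'a::real_normed_vector set \<Rightarrow> ('a \<Rightarrow> real) \<Rightarrow> bool" where
  "smooth_on U f \<longleftrightarrow> (\<forall>k. C_k k U f)"

definition smooth_boundary :: "'a::euclidean_space set \<Rightarrow> bool" where
  "smooth_boundary K \<longleftrightarrow>
     (\<forall>q\<in>frontier K. \<exists>U f. open U \<and> q \<in> U \<and> smooth_on U f \<and>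
        frechet_derivative f (at q) \<noteq> (\<lambda>v. 0) \<and>
        K \<inter> U = {x\<in>U. f x \<le> 0})"

definition convex_body :: "'a::euclidean_space set \<Rightarrow> bool" where
  "convex_body K \<longleftrightarrow> compact K \<and> convex K \<and> interior K \<noteq> {}"

definition tangent_bd :: "'a::euclidean_space set \<Rightarrow> 'a \<Rightarrow> 'a set" where
  "tangent_bd K q = {v. \<exists>c::real \<Rightarrow> 'a. c 0 = q \<and> (c has_vector_derivative v) (at 0) \<and>
        (\<exists>e>0. \<forall>t. \<bar>t\<bar> < e \<longrightarrow> c t \<in> frontier K)}"

definition orth_compl :: "'a::euclidean_space set \<Rightarrow> 'a set" where
  "orth_compl T = {w. \<forall>v\<in>T. w \<bullet> v = 0}"

definition outer_normal :: "'a::euclidean_space set \<Rightarrow> 'a \<Rightarrow> 'a" where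
  "outer_normal K q = (THE u. norm u = 1 \<and> u \<in> orth_compl (tangent_bd K q) \<and>
        (\<exists>e>0. \<forall>t. 0 < t \<and> t < e \<longrightarrow> q + t *\<^sub>R u \<notin> K))"

definition supp :: "'a::euclidean_space set \<Rightarrow> 'a \<Rightarrow> real" where
  "supp S \<nu> = Sup ((\<lambda>s. s \<bullet> \<nu>) ` S)"

text \<open>Curves on S^1 = R/Z are represented as 1-periodic functions on the reals;
  a subset B of S^1 is represented by its representatives in [0,1).\<close>
definition lift :: "real set \<Rightarrow> real set" where
  "lift B = {t. frac t \<in> B}"

definition vel :: "(real \<Rightarrow> 'a::real_normed_vector) \<Rightarrow> real \<Rightarrow> 'a" where
  "vel \<gamma> s = vector_derivative \<gamma> (at s)"

definition billiard_traj_with :: "'a::euclidean_space set \<Rightarrow> (real \<Rightarrow> 'a) \<Rightarrow> real set \<Rightarrow> bool" where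
  "billiard_traj_with K \<gamma> B \<longleftrightarrow>
     (\<forall>t. \<gamma> (t + 1) = \<gamma> t) \<and> continuous_on UNIV \<gamma> \<and> \<gamma> ` UNIV \<subseteq> K \<and>
     (\<exists>s t. \<gamma> s \<noteq> \<gamma> t) \<and>
     finite B \<and> B \<subseteq> {0..<1} \<and>
     (\<forall>t. t \<notin> lift B \<longrightarrow> \<gamma> differentiable (at t) \<and> (vel \<gamma> has_vector_derivative 0) (at t)) \<and>
     (\<forall>t\<in>B. \<exists>vp vm. (vel \<gamma> \<longlongrightarrow> vp) (at_right t) \<and> (vel \<gamma> \<longlongrightarrow> vm) (at_left t) \<and>
        \<gamma> t \<in> frontier K \<and>
        vp + vm \<in> tangent_bd K (\<gamma> t) \<and>
        vp - vm \<in> orth_compl (tangent_bd K (\<gamma> t)) \<and> vp - vm \<noteq> 0)"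

definition billiard_trajs :: "'a::euclidean_space set \<Rightarrow> (real \<Rightarrow> 'a) set" where
  "billiard_trajs K = {\<gamma>. \<exists>B. billiard_traj_with K \<gamma> B}"

definition piecewise_linear_closed :: "(real \<Rightarrow> 'a::real_normed_vector) \<Rightarrow> bool" where
  "piecewise_linear_closed \<gamma> \<longleftrightarrow>
     (\<forall>t. \<gamma> (t + 1) = \<gamma> t) \<and> continuous_on UNIV \<gamma> \<and>
     (\<exists>P. finite P \<and> P \<subseteq> {0..<1} \<and>
        (\<forall>a b. a < b \<and> {a<..<b} \<inter> lift P = {} \<longrightarrow>
           (\<exists>u v. \<forall>s\<in>{a..b}. \<gamma> s = u + s *\<^sub>R v)))"

definition PPlus :: "'a::euclidean_space set \<Rightarrow> (real \<Rightarrow> 'a) set" where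
  "PPlus K = {\<gamma>. piecewise_linear_closed \<gamma> \<and>
      (\<forall>x. \<not> ((\<lambda>p. p + x) ` (\<gamma> ` UNIV) \<subseteq> interior K))}"

end

theory Submission
  imports Defs
begin

lemma key_dir:
  fixes K :: "'a::euclidean_space set" and f :: "'a \<Rightarrow> real"
  assumes U: "open U" "q \<in> U" and fd: "(f has_derivative D) (at q)" and fq: "f q = 0"
    and KU: "K \<inter> U = {x\<in>U. f x \<le> 0}" and Dw: "D w < 0"
  shows "\<exists>e>0. \<forall>t. 0 < t \<and> t < e \<longrightarrow> q + t *\<^sub>R w \<in> K"
proof -
  have lin: "linear D" using fd has_derivative_linear by blast
  have "((\<lambda>t::real. q + t *\<^sub>R w) has_derivative (\<lambda>t. t *\<^sub>R w)) (at 0)"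
    by (auto intro!: derivative_eq_intros)
  moreover have "(f has_derivative D) (at ((\<lambda>t::real. q + t *\<^sub>R w) 0))" using fd by simp
  ultimately have "((f \<circ> (\<lambda>t::real. q + t *\<^sub>R w)) has_derivative (D \<circ> (\<lambda>t. t *\<^sub>R w))) (at 0)"
    by (rule diff_chain_at)
  moreover have "D \<circ> (\<lambda>t. t *\<^sub>R w) = (*) (D w)"
    using linear_scale[OF lin] by (auto simp: fun_eq_iff)
  ultimately have "((\<lambda>t. f (q + t *\<^sub>R w)) has_field_derivative D w) (at 0)"
    by (simp add: has_field_derivative_def o_def)
  from DERIV_neg_dec_right[OF this Dw] obtain d where d: "d > 0"
    "\<And>h. h > 0 \<Longrightarrow> h < d \<Longrightarrow> f (q + h *\<^sub>R w) < 0" using fq by auto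
  obtain r where r: "r > 0" "ball q r \<subseteq> U" using U open_contains_ball by blast
  define e where "e = min d (r / (norm w + 1))"
  have nw: "norm w + 1 > 0" by (smt (verit) norm_ge_zero)
  have "e > 0" using d r divide_pos_pos[OF r(1) nw] by (simp add: e_def)
  moreover have "q + t *\<^sub>R w \<in> K" if "0 < t" "t < e" for t
  proof -
    have "norm (t *\<^sub>R w) < r"
    proof -
      have "norm (t *\<^sub>R w) = t * norm w" using that by simp
      also have "\<dots> \<le> t * (norm w + 1)" using that by (intro mult_left_mono) auto
      also have "\<dots> < r" proof -
        have "t < r / (norm w + 1)" using that by (simp add: e_def)
        then show ?thesis using pos_less_divide_eq[OF nw, of t r] by simp
      qed
      finally show ?thesis .
    qed
    then have "dist q (q + t *\<^sub>R w) < r" by (simp add: dist_norm)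
    then have "q + t *\<^sub>R w \<in> U" using r(2) by auto
    moreover have "f (q + t *\<^sub>R w) < 0" using d(2)[of t] that by (simp add: e_def)
    ultimately have "q + t *\<^sub>R w \<in> {x\<in>U. f x \<le> 0}" by simp
    hence "q + t *\<^sub>R w \<in> K \<inter> U" unfolding KU .
    thus ?thesis by simp
  qed
  ultimately show ?thesis by blast
qed

lemma le_eps_le0:
  fixes x c :: real
  assumes "\<And>e. e > 0 \<Longrightarrow> x \<le> e * c"
  shows "x \<le> 0"
proof (rule ccontr)
  assume "\<not> x \<le> 0"
  hence x: "x > 0" by simp
  define e where "e = x / (2 * (\<bar>c\<bar> + 1))"
  have ep: "e > 0" using x by (simp add: e_def add_pos_nonneg)
  have "x \<le> e * c" using assms ep by blast
  also have "\<dots> \<le> e * \<bar>c\<bar>" using ep by (simp add: mult_left_mono)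
  also have "\<dots> < x"
  proof -
    have "e * \<bar>c\<bar> = x * (\<bar>c\<bar> / (2 * (\<bar>c\<bar> + 1)))" by (simp add: e_def)
    also have "\<bar>c\<bar> / (2 * (\<bar>c\<bar> + 1)) < 1" by (simp add: add_pos_nonneg)
    hence "x * (\<bar>c\<bar> / (2 * (\<bar>c\<bar> + 1))) < x * 1" using x by (intro mult_strict_left_mono) auto
    finally show ?thesis by simp
  qed
  finally show False by simp
qed

lemma f_zero_at:
  fixes K :: "'a::euclidean_space set" and f :: "'a \<Rightarrow> real"
  assumes U: "open U" "q \<in> U" and fd: "(f has_derivative D) (at q)" and qK: "q \<in> K"
    and qn: "q \<notin> interior K" and KU: "K \<inter> U = {x\<in>U. f x \<le> 0}"
  shows "f q = 0"
proof (rule ccontr)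
  assume "f q \<noteq> 0"
  moreover have "q \<in> K \<inter> U" using qK U by simp
  hence "f q \<le> 0" unfolding KU by simp
  ultimately have neg: "f q < 0" by simp
  have "continuous (at q) f" using fd has_derivative_continuous by blast
  hence "(f \<longlongrightarrow> f q) (at q)" by (simp add: continuous_at)
  hence "eventually (\<lambda>y. f y < 0) (at q)" using neg order_tendstoD(2) by blast
  then obtain d where d: "d > 0" "\<And>y. y \<noteq> q \<Longrightarrow> dist y q < d \<Longrightarrow> f y < 0"
    by (auto simp: eventually_at)
  obtain r where r: "r > 0" "ball q r \<subseteq> U" using U open_contains_ball by blast
  have "ball q (min d r) \<subseteq> K"
  proof
    fix y assume y: "y \<in> ball q (min d r)"
    hence yU: "y \<in> U" using r by auto
    have "f y \<le> 0"
    proof (cases "y = q")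
      case True then show ?thesis using neg by simp
    next
      case False then show ?thesis using d y by (auto simp: dist_commute intro: less_imp_le)
    qed
    hence "y \<in> {x\<in>U. f x \<le> 0}" using yU by simp
    hence "y \<in> K \<inter> U" unfolding KU .
    thus "y \<in> K" by simp
  qed
  hence "q \<in> interior K" using d r by (auto simp: mem_interior intro!: exI[of _ "min d r"])
  thus False using qn by simp
qed

lemma normal_aux:
  fixes K :: "'a::euclidean_space set"
  assumes cb: "convex_body K" and sb: "smooth_boundary K" and q: "q \<in> frontier K"
  shows "\<exists>n0. norm n0 = 1 \<and> (\<forall>y\<in>K. y \<bullet> n0 \<le> q \<bullet> n0) \<and>
     (\<forall>w. w \<bullet> n0 < 0 \<longrightarrow> (\<exists>e>0. \<forall>t. 0 < t \<and> t < e \<longrightarrow> q + t *\<^sub>R w \<in> K))"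
proof -
  from cb have K: "compact K" "convex K" "interior K \<noteq> {}" by (auto simp: convex_body_def)
  have clK: "closed K" using compact_imp_closed K by auto
  have qK: "q \<in> K" using q clK frontier_subset_closed by blast
  have qnint: "q \<notin> interior K" using q by (simp add: frontier_def)
  from sb q obtain U f where Uf: "open U" "q \<in> U" "smooth_on U f"
      "frechet_derivative f (at q) \<noteq> (\<lambda>v. 0)" "K \<inter> U = {x\<in>U. f x \<le> 0}"
    unfolding smooth_boundary_def by blast
  define D where "D = frechet_derivative f (at q)"
  have "C_k (Suc 0) U f" using Uf(3) smooth_on_def by blast
  hence "f differentiable (at q)" using Uf(2) by simp
  hence fd: "(f has_derivative D) (at q)" by (simp add: D_def frechet_derivative_works)
  have lin: "linear D" using fd has_derivative_linear by blast
  define g where "g = (\<Sum>i\<in>Basis. D i *\<^sub>R i)"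
  have Dg: "D x = g \<bullet> x" for x
  proof -
    have "D x * 1 = (\<Sum>i\<in>Basis. (x\<bullet>i) * (D i * 1))"
      using Linear_Algebra.linear_componentwise[OF lin, of x 1] by simp
    thus ?thesis by (simp add: g_def inner_sum_left inner_sum_right inner_commute mult.commute)
  qed
  have g0: "g \<noteq> 0" using Uf(4) Dg by (auto simp: D_def[symmetric] fun_eq_iff)
  have fq: "f q = 0" by (rule f_zero_at[OF Uf(1,2) fd qK qnint Uf(5)])
  have KEY: "\<exists>e>0. \<forall>t. 0 < t \<and> t < e \<longrightarrow> q + t *\<^sub>R w \<in> K" if "g \<bullet> w < 0" for w
    using key_dir[OF Uf(1,2) fd fq Uf(5)] that Dg by simp
  have "rel_interior K = interior K" by (rule rel_interior_nonempty_interior[OF K(3)])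
  then obtain a where a: "a \<noteq> 0" "\<And>y. y \<in> closure K \<Longrightarrow> a \<bullet> q \<le> a \<bullet> y"
    using supporting_hyperplane_relative_frontier[OF K(2), of q] qK clK qnint
    by (metis closure_closed)
  define n0 where "n0 = - (a /\<^sub>R norm a)"
  have n0u: "norm n0 = 1" using a by (simp add: n0_def)
  have sup: "y \<bullet> n0 \<le> q \<bullet> n0" if "y \<in> K" for y
  proof -
    have "a \<bullet> q \<le> a \<bullet> y" using a(2) that clK by (simp add: closure_closed)
    hence "(a \<bullet> q) / norm a \<le> (a \<bullet> y) / norm a" by (simp add: divide_right_mono)
    thus ?thesis by (simp add: n0_def inner_commute divide_inverse mult.commute)
  qed
  have halfsp: "w \<bullet> n0 \<le> 0" if gw: "g \<bullet> w < 0" for w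
  proof -
    obtain e where e: "e > 0" "\<And>t. 0 < t \<Longrightarrow> t < e \<Longrightarrow> q + t *\<^sub>R w \<in> K" using KEY[OF gw] by blast
    have "(q + (e/2) *\<^sub>R w) \<bullet> n0 \<le> q \<bullet> n0" using sup e by simp
    hence "(e/2) * (w \<bullet> n0) \<le> 0" by (simp add: inner_add_left)
    thus ?thesis using e by (simp add: mult_le_0_iff)
  qed
  have perp1: "v \<bullet> n0 \<le> 0" if "g \<bullet> v = 0" for v
  proof (rule le_eps_le0)
    fix e :: real assume e: "e > 0"
    have "g \<bullet> (v - e *\<^sub>R g) = - e * (g \<bullet> g)" using that by (simp add: inner_diff_right)
    also have "\<dots> < 0" using e g0 by simp
    finally have "(v - e *\<^sub>R g) \<bullet> n0 \<le> 0" by (rule halfsp)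
    thus "v \<bullet> n0 \<le> e * (g \<bullet> n0)" by (simp add: inner_diff_left)
  qed
  have perp: "v \<bullet> n0 = 0" if "g \<bullet> v = 0" for v
    using perp1[of v] perp1[of "-v"] that by simp
  define c where "c = (n0 \<bullet> g) / (g \<bullet> g)"
  have gg: "g \<bullet> g \<noteq> 0" using g0 by simp
  have n0c: "n0 = c *\<^sub>R g"
  proof -
    define v where "v = n0 - c *\<^sub>R g"
    have gv: "g \<bullet> v = 0" using gg by (simp add: v_def c_def inner_diff_right inner_commute)
    hence "v \<bullet> n0 = 0" by (rule perp)
    hence "v \<bullet> v = 0" using gv by (simp add: v_def inner_diff_right inner_commute)
    thus ?thesis by (simp add: v_def)
  qed
  have "(-g) \<bullet> n0 \<le> 0" using gg by (intro halfsp) simp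
  hence "c * (g \<bullet> g) \<ge> 0" using n0c by simp
  moreover have "g \<bullet> g > 0" using g0 by simp
  ultimately have "c \<ge> 0" by (simp add: zero_le_mult_iff)
  moreover have "c \<noteq> 0" using n0u n0c by auto
  ultimately have cpos: "c > 0" by simp
  have P1: "\<forall>w. w \<bullet> n0 < 0 \<longrightarrow> (\<exists>e>0. \<forall>t. 0 < t \<and> t < e \<longrightarrow> q + t *\<^sub>R w \<in> K)"
  proof (intro allI impI)
    fix w assume wn: "w \<bullet> n0 < 0"
    have "w \<bullet> n0 = c * (g \<bullet> w)" using n0c by (simp add: inner_commute)
    hence "g \<bullet> w < 0" using wn cpos by (simp add: mult_less_0_iff)
    thus "\<exists>e>0. \<forall>t. 0 < t \<and> t < e \<longrightarrow> q + t *\<^sub>R w \<in> K" by (rule KEY)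
  qed
  show ?thesis
    apply (rule exI[of _ n0])
    using n0u sup P1 by blast
qed

lemma normal_props:
  fixes K :: "'a::euclidean_space set"
  assumes cb: "convex_body K" and sb: "smooth_boundary K" and q: "q \<in> frontier K"
  shows "norm (outer_normal K q) = 1 \<and> (\<forall>y\<in>K. y \<bullet> outer_normal K q \<le> q \<bullet> outer_normal K q) \<and>
     (\<forall>w\<in>orth_compl (tangent_bd K q). w = (w \<bullet> outer_normal K q) *\<^sub>R outer_normal K q) \<and>
     (\<forall>v\<in>tangent_bd K q. v \<bullet> outer_normal K q = 0)"
proof -
  from cb have K: "compact K" "convex K" "interior K \<noteq> {}" by (auto simp: convex_body_def)
  have clK: "closed K" using compact_imp_closed K by auto
  have qK: "q \<in> K" using q clK frontier_subset_closed by blast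
  obtain n0 where n0u: "norm n0 = 1" and sup: "\<And>y. y \<in> K \<Longrightarrow> y \<bullet> n0 \<le> q \<bullet> n0"
    and P1: "\<And>w. w \<bullet> n0 < 0 \<Longrightarrow> \<exists>e>0. \<forall>t. 0 < t \<and> t < e \<longrightarrow> q + t *\<^sub>R w \<in> K"
    using normal_aux[OF cb sb q] by blast
  have nn: "n0 \<bullet> n0 = 1" using n0u by (simp add: dot_square_norm)
  have frK: "frontier K \<subseteq> K" using clK frontier_subset_closed by blast
  have tperp: "v \<bullet> n0 = 0" if "v \<in> tangent_bd K q" for v
  proof -
    from that obtain cc e where cc: "cc 0 = q" "(cc has_vector_derivative v) (at 0)" "e > 0"
      "\<And>t. \<bar>t\<bar> < e \<Longrightarrow> cc t \<in> frontier K"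
      unfolding tangent_bd_def by blast
    have "((\<lambda>t. cc t \<bullet> n0) has_vector_derivative v \<bullet> n0) (at 0)"
      by (rule bounded_linear.has_vector_derivative[OF bounded_linear_inner_left cc(2)])
    hence "((\<lambda>t. cc t \<bullet> n0) has_real_derivative v \<bullet> n0) (at 0)"
      by (simp add: has_real_derivative_iff_has_vector_derivative)
    moreover have "\<forall>y. \<bar>0 - y\<bar> < e \<longrightarrow> cc y \<bullet> n0 \<le> cc 0 \<bullet> n0"
      using cc(1,4) frK sup by auto
    ultimately show ?thesis using DERIV_local_max cc(3) by blast
  qed
  have tang: "v \<in> tangent_bd K q" if vn: "v \<bullet> n0 = 0" for v
  proof -
    have lowb: "\<exists>e>0. \<forall>t. \<bar>t\<bar> < e \<longrightarrow> q + t *\<^sub>R v + (- (d * \<bar>t\<bar>)) *\<^sub>R n0 \<in> K" if d: "d > 0" for d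
    proof -
      have "(v - d *\<^sub>R n0) \<bullet> n0 < 0" using vn nn d by (simp add: inner_diff_left)
      then obtain e1 where e1: "e1 > 0" "\<And>t. 0 < t \<Longrightarrow> t < e1 \<Longrightarrow> q + t *\<^sub>R (v - d *\<^sub>R n0) \<in> K"
        using P1 by blast
      have "(- v - d *\<^sub>R n0) \<bullet> n0 < 0" using vn nn d by (simp add: inner_diff_left)
      then obtain e2 where e2: "e2 > 0" "\<And>t. 0 < t \<Longrightarrow> t < e2 \<Longrightarrow> q + t *\<^sub>R (- v - d *\<^sub>R n0) \<in> K"
        using P1 by blast
      have "q + t *\<^sub>R v + (- (d * \<bar>t\<bar>)) *\<^sub>R n0 \<in> K" if t: "\<bar>t\<bar> < min e1 e2" for t
      proof (cases "t > 0")
        case True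
        then show ?thesis using e1(2)[of t] t by (simp add: algebra_simps)
      next
        case False
        show ?thesis
        proof (cases "t = 0")
          case True then show ?thesis using qK by simp
        next
          case False
          hence "0 < - t" using \<open>\<not> t > 0\<close> by simp
          then show ?thesis using e2(2)[of "-t"] t \<open>\<not> t > 0\<close> by (simp add: algebra_simps)
        qed
      qed
      thus ?thesis using e1 e2 by (intro exI[of _ "min e1 e2"]) auto
    qed
    define S where "S t = {s. q + t *\<^sub>R v + s *\<^sub>R n0 \<in> K}" for t
    define \<phi> where "\<phi> t = Sup (S t)" for t
    have Sle: "s \<le> 0" if "s \<in> S t" for s t
    proof -
      have "(q + t *\<^sub>R v + s *\<^sub>R n0) \<bullet> n0 \<le> q \<bullet> n0" using sup that by (simp add: S_def)
      thus ?thesis using vn nn by (simp add: inner_add_left)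
    qed
    have Scl: "closed (S t)" for t
    proof -
      have "closed ((\<lambda>s. q + t *\<^sub>R v + s *\<^sub>R n0) -` K)"
        by (rule closed_vimage[OF clK]) (intro continuous_intros)
      moreover have "S t = (\<lambda>s. q + t *\<^sub>R v + s *\<^sub>R n0) -` K" by (simp add: S_def vimage_def)
      ultimately show ?thesis by simp
    qed
    have Sbdd: "bdd_above (S t)" for t using Sle by (auto intro!: bdd_aboveI)
    obtain e0 where e0: "e0 > 0" "\<And>t. \<bar>t\<bar> < e0 \<Longrightarrow> - (1 * \<bar>t\<bar>) \<in> S t"
      using lowb[of 1] by (auto simp: S_def)
    have phiS: "\<phi> t \<in> S t" if "\<bar>t\<bar> < e0" for t
      unfolding \<phi>_def using e0(2)[OF that] Sbdd Scl by (intro closed_contains_Sup) auto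
    have phile: "\<phi> t \<le> 0" if "\<bar>t\<bar> < e0" for t using phiS[OF that] Sle by blast
    have phi0: "\<phi> 0 = 0"
    proof -
      have "0 \<in> S 0" using qK by (simp add: S_def)
      hence "0 \<le> \<phi> 0" unfolding \<phi>_def using Sbdd by (rule cSup_upper)
      thus ?thesis using phile[of 0] e0 by simp
    qed
    have phider: "(\<phi> has_real_derivative 0) (at 0)"
      unfolding has_field_derivative_iff
    proof (rule tendstoI)
      fix r :: real assume r: "r > 0"
      obtain e where e: "e > 0" "\<And>t. \<bar>t\<bar> < e \<Longrightarrow> - ((r/2) * \<bar>t\<bar>) \<in> S t"
        using lowb[of "r/2"] r by (auto simp: S_def)
      have "dist ((\<phi> y - \<phi> 0) / (y - 0)) 0 < r" if y: "y \<noteq> 0" "dist y 0 < min e e0" for y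
      proof -
        have "- ((r/2) * \<bar>y\<bar>) \<le> \<phi> y" unfolding \<phi>_def using e(2)[of y] y Sbdd
          by (intro cSup_upper) (auto simp: dist_real_def)
        moreover have "\<phi> y \<le> 0" using phile[of y] y by (simp add: dist_real_def)
        ultimately have "\<bar>\<phi> y\<bar> \<le> (r/2) * \<bar>y\<bar>" by simp
        hence "\<bar>\<phi> y\<bar> / \<bar>y\<bar> \<le> r/2" using y by (simp add: divide_le_eq)
        hence "\<bar>\<phi> y\<bar> / \<bar>y\<bar> < r" using r by linarith
        thus ?thesis using phi0 by (simp add: dist_real_def abs_divide)
      qed
      thus "eventually (\<lambda>y. dist ((\<phi> y - \<phi> 0) / (y - 0)) 0 < r) (at 0)"
        using e e0 by (auto simp: eventually_at intro!: exI[of _ "min e e0"])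
    qed
    define cc where "cc t = q + t *\<^sub>R v + \<phi> t *\<^sub>R n0" for t
    have "cc 0 = q" by (simp add: cc_def phi0)
    moreover have "(cc has_vector_derivative v) (at 0)"
    proof -
      have d1: "((\<lambda>t. t *\<^sub>R v) has_vector_derivative v) (at 0)"
        using has_vector_derivative_scaleR[OF DERIV_ident has_vector_derivative_const[of v]] by simp
      have d2: "((\<lambda>t. \<phi> t *\<^sub>R n0) has_vector_derivative 0) (at 0)"
        using has_vector_derivative_scaleR[OF phider has_vector_derivative_const[of n0]] by simp
      have "((\<lambda>t. q + t *\<^sub>R v + \<phi> t *\<^sub>R n0) has_vector_derivative (0 + v + 0)) (at 0)"
        by (intro has_vector_derivative_add has_vector_derivative_const d1 d2)
      moreover have "cc = (\<lambda>t. q + t *\<^sub>R v + \<phi> t *\<^sub>R n0)" by (simp add: fun_eq_iff cc_def)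
      ultimately show ?thesis by simp
    qed
    moreover have "cc t \<in> frontier K" if t: "\<bar>t\<bar> < e0" for t
    proof -
      have inK: "cc t \<in> K" using phiS[OF t] by (simp add: S_def cc_def)
      have "cc t \<notin> interior K"
      proof
        assume "cc t \<in> interior K"
        then obtain r where r: "r > 0" "ball (cc t) r \<subseteq> K" by (auto simp: mem_interior)
        have "cc t + (r/2) *\<^sub>R n0 \<in> ball (cc t) r" using r n0u by (simp add: dist_norm)
        hence "\<phi> t + r/2 \<in> S t" using r by (auto simp: S_def cc_def algebra_simps)
        hence "\<phi> t + r/2 \<le> \<phi> t" unfolding \<phi>_def using Sbdd by (rule cSup_upper)
        thus False using r by simp
      qed
      thus ?thesis using inK clK by (simp add: frontier_def closure_closed)
    qed
    ultimately show ?thesis unfolding tangent_bd_def using e0(1) by blast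
  qed
  have orth: "w = (w \<bullet> n0) *\<^sub>R n0" if w: "w \<in> orth_compl (tangent_bd K q)" for w
  proof -
    define v where "v = w - (w \<bullet> n0) *\<^sub>R n0"
    have "v \<bullet> n0 = 0" using nn by (simp add: v_def inner_diff_left)
    hence "v \<in> tangent_bd K q" by (rule tang)
    hence wv: "w \<bullet> v = 0" using w by (simp add: orth_compl_def)
    have "v \<bullet> v = 0" using wv \<open>v \<bullet> n0 = 0\<close> by (simp add: v_def inner_diff_left inner_commute)
    thus ?thesis by (simp add: v_def)
  qed
  have on: "outer_normal K q = n0"
    unfolding outer_normal_def
  proof (rule the_equality)
    have "n0 \<in> orth_compl (tangent_bd K q)" using tperp by (simp add: orth_compl_def inner_commute)
    moreover have "q + t *\<^sub>R n0 \<notin> K" if "0 < t" for t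
    proof
      assume "q + t *\<^sub>R n0 \<in> K"
      hence "(q + t *\<^sub>R n0) \<bullet> n0 \<le> q \<bullet> n0" by (rule sup)
      thus False using that nn by (simp add: inner_add_left)
    qed
    ultimately show "norm n0 = 1 \<and> n0 \<in> orth_compl (tangent_bd K q) \<and>
        (\<exists>e>0. \<forall>t. 0 < t \<and> t < e \<longrightarrow> q + t *\<^sub>R n0 \<notin> K)" using n0u by (auto intro!: exI[of _ 1])
  next
    fix u assume u: "norm u = 1 \<and> u \<in> orth_compl (tangent_bd K q) \<and>
        (\<exists>e>0. \<forall>t. 0 < t \<and> t < e \<longrightarrow> q + t *\<^sub>R u \<notin> K)"
    then obtain e where e: "e > 0" "\<And>t. 0 < t \<Longrightarrow> t < e \<Longrightarrow> q + t *\<^sub>R u \<notin> K" by blast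
    have ueq: "u = (u \<bullet> n0) *\<^sub>R n0" using u orth by blast
    hence "norm u = \<bar>u \<bullet> n0\<bar>" using n0u by (metis mult.right_neutral norm_scaleR)
    hence "\<bar>u \<bullet> n0\<bar> = 1" using u by simp
    moreover have "u \<bullet> n0 \<noteq> -1"
    proof
      assume m: "u \<bullet> n0 = -1"
      hence "u \<bullet> n0 < 0" by simp
      then obtain e1 where e1: "e1 > 0" "\<And>t. 0 < t \<Longrightarrow> t < e1 \<Longrightarrow> q + t *\<^sub>R u \<in> K" using P1 by blast
      have "q + (min e e1 / 2) *\<^sub>R u \<in> K" using e1 e by (intro e1(2)) auto
      moreover have "q + (min e e1 / 2) *\<^sub>R u \<notin> K" using e1 e by (intro e(2)) auto
      ultimately show False by simp
    qed
    ultimately have "u \<bullet> n0 = 1" by linarith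
    thus "u = n0" using ueq by simp
  qed
  show ?thesis unfolding on using n0u sup orth tperp by blast
qed

lemma per_nat:
  fixes \<gamma> :: "real \<Rightarrow> 'a" and t :: real
  assumes p: "\<forall>t. \<gamma> (t + 1) = \<gamma> t"
  shows "\<gamma> (t + real n) = \<gamma> t"
proof (induction n)
  case 0 then show ?case by simp
next
  case (Suc n)
  have "\<gamma> (t + real (Suc n)) = \<gamma> ((t + real n) + 1)" by (simp add: algebra_simps)
  also have "\<dots> = \<gamma> (t + real n)" using p by (rule spec)
  finally show ?case using Suc.IH by (rule trans)
qed

lemma per_int:
  fixes \<gamma> :: "real \<Rightarrow> 'a" and t :: real
  assumes p: "\<forall>t. \<gamma> (t + 1) = \<gamma> t"
  shows "\<gamma> (t + of_int k) = \<gamma> t"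
proof (cases "k \<ge> 0")
  case True
  then obtain n where "k = int n" using nonneg_int_cases by blast
  then show ?thesis using per_nat[OF p, of t n] by simp
next
  case False
  define n where "n = nat (- k)"
  have k: "k = - int n" using False by (simp add: n_def)
  have "\<gamma> ((t - real n) + real n) = \<gamma> (t - real n)" by (rule per_nat[OF p])
  moreover have "t + of_int k = t - real n" using k by simp
  ultimately show ?thesis by simp
qed

lemma per_frac:
  fixes \<gamma> :: "real \<Rightarrow> 'a" and t :: real
  assumes p: "\<forall>t. \<gamma> (t + 1) = \<gamma> t"
  shows "\<gamma> t = \<gamma> (frac t)"
proof -
  have "\<gamma> (frac t + of_int \<lfloor>t\<rfloor>) = \<gamma> (frac t)" by (rule per_int[OF p])
  thus ?thesis by (simp add: frac_def)
qed

lemma lift_fin: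
  assumes "finite B"
  shows "finite (lift B \<inter> {a..b})"
proof (rule finite_subset)
  show "lift B \<inter> {a..b} \<subseteq> (\<lambda>(x,k). x + of_int k) ` (B \<times> {\<lfloor>a\<rfloor>..\<lfloor>b\<rfloor>})"
  proof
    fix t assume t: "t \<in> lift B \<inter> {a..b}"
    hence "frac t \<in> B" by (simp add: lift_def)
    moreover have "\<lfloor>t\<rfloor> \<in> {\<lfloor>a\<rfloor>..\<lfloor>b\<rfloor>}" using t by (auto intro: floor_mono)
    moreover have "t = frac t + of_int \<lfloor>t\<rfloor>" by (simp add: frac_def)
    ultimately show "t \<in> (\<lambda>(x,k). x + of_int k) ` (B \<times> {\<lfloor>a\<rfloor>..\<lfloor>b\<rfloor>})"
      by (intro image_eqI[of _ _ "(frac t, \<lfloor>t\<rfloor>)"]) auto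
  qed
  show "finite ((\<lambda>(x,k). x + of_int k) ` (B \<times> {\<lfloor>a\<rfloor>..\<lfloor>b\<rfloor>}))"
    using assms by simp
qed

lemma lin_piece:
  fixes \<gamma> :: "real \<Rightarrow> 'a::euclidean_space"
  assumes bt: "billiard_traj_with K \<gamma> B" and ab: "a < b" and no: "{a<..<b} \<inter> lift B = {}"
  shows "\<exists>c. (\<forall>s\<in>{a<..<b}. vel \<gamma> s = c) \<and> (\<forall>s\<in>{a..b}. \<gamma> s = \<gamma> a + (s - a) *\<^sub>R c)"
proof -
  have nd: "\<gamma> differentiable (at s) \<and> (vel \<gamma> has_vector_derivative 0) (at s)" if "s \<in> {a<..<b}" for s
  proof -
    have "s \<notin> lift B" using no that by blast
    thus ?thesis using bt unfolding billiard_traj_with_def by blast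
  qed
  have "\<exists>c. \<forall>x\<in>{a<..<b}. vel \<gamma> x = c"
  proof (rule has_derivative_zero_constant)
    show "convex {a<..<b}" by simp
    fix x assume x: "x \<in> {a<..<b}"
    have "(vel \<gamma> has_derivative (\<lambda>h. h *\<^sub>R 0)) (at x)"
      using nd[OF x] by (simp add: has_vector_derivative_def)
    hence "(vel \<gamma> has_derivative (\<lambda>h. 0)) (at x)" by simp
    thus "(vel \<gamma> has_derivative (\<lambda>h. 0)) (at x within {a<..<b})" by (rule has_derivative_at_withinI)
  qed
  then obtain c where c: "\<And>x. x \<in> {a<..<b} \<Longrightarrow> vel \<gamma> x = c" by blast
  define F where "F s = \<gamma> s - \<gamma> a - (s - a) *\<^sub>R c" for s
  have cont: "continuous_on UNIV \<gamma>" using bt by (simp add: billiard_traj_with_def)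
  have Fc: "continuous_on {a..b} F"
    unfolding F_def by (intro continuous_intros continuous_on_subset[OF cont]) auto
  have Fd: "(F has_derivative (\<lambda>h. 0)) (at x within {a..b})" if x: "x \<in> {a..b} - {a,b}" for x
  proof -
    have xi: "x \<in> {a<..<b}" using x by auto
    have "(\<gamma> has_vector_derivative vector_derivative \<gamma> (at x)) (at x)"
      using nd[OF xi] by (simp add: vector_derivative_works[symmetric])
    hence g: "(\<gamma> has_vector_derivative c) (at x)" using c[OF xi] by (simp add: vel_def)
    have l: "((\<lambda>s. (s - a) *\<^sub>R c) has_vector_derivative c) (at x)"
      using has_vector_derivative_scaleR[OF DERIV_diff[OF DERIV_ident DERIV_const[of a]]
          has_vector_derivative_const[of c]] by simp
    have "(F has_vector_derivative (c - 0 - c)) (at x)"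
      unfolding F_def[abs_def]
      by (intro has_vector_derivative_diff g l has_vector_derivative_const)
    hence "(F has_derivative (\<lambda>h. h *\<^sub>R 0)) (at x)" by (simp add: has_vector_derivative_def)
    hence "(F has_derivative (\<lambda>h. 0)) (at x)" by simp
    thus ?thesis by (rule has_derivative_at_withinI)
  qed
  have "F s = 0" if "s \<in> {a..b}" for s
    by (rule has_derivative_zero_unique_strong_interval[of "{a,b}" a b F 0 s]) (use Fc Fd that in \<open>auto simp: F_def\<close>)
  hence "\<forall>s\<in>{a..b}. \<gamma> s = \<gamma> a + (s - a) *\<^sub>R c" by (auto simp: F_def algebra_simps)
  with c show ?thesis by blast
qed

lemma iso:
  assumes "finite B"
  shows "\<exists>d>0. \<forall>s. s \<in> lift B \<longrightarrow> s \<noteq> t \<longrightarrow> d \<le> \<bar>s - t\<bar>"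
proof -
  have "\<exists>\<delta>>0. \<forall>x\<in>lift B \<inter> {t-1..t+1}. x \<noteq> t \<longrightarrow> \<delta> \<le> dist t x"
    by (rule finite_set_avoid[OF lift_fin[OF assms]])
  then obtain \<delta> where \<delta>0: "\<delta> > 0" and \<delta>: "\<And>x. x \<in> lift B \<inter> {t-1..t+1} \<Longrightarrow> x \<noteq> t \<Longrightarrow> \<delta> \<le> dist t x"
    by blast
  have "min \<delta> 1 \<le> \<bar>s - t\<bar>" if s: "s \<in> lift B" "s \<noteq> t" for s
  proof (cases "s \<in> {t-1..t+1}")
    case True
    hence "\<delta> \<le> dist t s" using \<delta> s by simp
    hence "\<delta> \<le> \<bar>s - t\<bar>" by (simp add: dist_real_def abs_minus_commute)
    thus ?thesis by linarith
  next
    case False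
    hence "1 \<le> \<bar>s - t\<bar>" by (auto simp: abs_if)
    thus ?thesis by linarith
  qed
  moreover have "min \<delta> 1 > 0" using \<delta>0 by simp
  ultimately show ?thesis by blast
qed

lemma jump_local:
  fixes \<gamma> :: "real \<Rightarrow> 'a::euclidean_space"
  assumes bt: "billiard_traj_with K \<gamma> B"
    and vp: "(vel \<gamma> \<longlongrightarrow> vp) (at_right t)" and vm: "(vel \<gamma> \<longlongrightarrow> vm) (at_left t)"
  shows "\<exists>e>0. \<forall>u. 0 \<le> u \<and> u \<le> e \<longrightarrow> \<gamma> (t + u) = \<gamma> t + u *\<^sub>R vp \<and> \<gamma> (t - u) = \<gamma> t - u *\<^sub>R vm"
proof -
  have fB: "finite B" using bt by (simp add: billiard_traj_with_def)
  obtain d where d: "d > 0" "\<And>s. s \<in> lift B \<Longrightarrow> s \<noteq> t \<Longrightarrow> d \<le> \<bar>s - t\<bar>"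
    using iso[OF fB, of t] by blast
  have n1: "{t<..<t+d} \<inter> lift B = {}"
  proof -
    have "s \<notin> lift B" if s: "s \<in> {t<..<t+d}" for s
    proof
      assume "s \<in> lift B"
      moreover have "s \<noteq> t" using s by simp
      ultimately have "d \<le> \<bar>s - t\<bar>" by (rule d(2))
      thus False using s by (simp add: abs_if split: if_splits)
    qed
    thus ?thesis by blast
  qed
  have n2: "{t-d<..<t} \<inter> lift B = {}"
  proof -
    have "s \<notin> lift B" if s: "s \<in> {t-d<..<t}" for s
    proof
      assume "s \<in> lift B"
      moreover have "s \<noteq> t" using s by simp
      ultimately have "d \<le> \<bar>s - t\<bar>" by (rule d(2))
      thus False using s by (simp add: abs_if split: if_splits)
    qed
    thus ?thesis by blast
  qed
  have "t < t + d" using d(1) by simp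
  from lin_piece[OF bt this n1] obtain c1 where c1a: "\<forall>s\<in>{t<..<t+d}. vel \<gamma> s = c1"
      and c1b: "\<forall>s\<in>{t..t+d}. \<gamma> s = \<gamma> t + (s - t) *\<^sub>R c1" by blast
  have c1: "\<And>s. s \<in> {t<..<t+d} \<Longrightarrow> vel \<gamma> s = c1"
      "\<And>s. s \<in> {t..t+d} \<Longrightarrow> \<gamma> s = \<gamma> t + (s - t) *\<^sub>R c1" using c1a c1b by (blast, blast)
  have "t - d < t" using d(1) by simp
  from lin_piece[OF bt this n2] obtain c2 where c2a: "\<forall>s\<in>{t-d<..<t}. vel \<gamma> s = c2"
      and c2b: "\<forall>s\<in>{t-d..t}. \<gamma> s = \<gamma> (t-d) + (s - (t-d)) *\<^sub>R c2" by blast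
  have c2: "\<And>s. s \<in> {t-d<..<t} \<Longrightarrow> vel \<gamma> s = c2"
      "\<And>s. s \<in> {t-d..t} \<Longrightarrow> \<gamma> s = \<gamma> (t-d) + (s - (t-d)) *\<^sub>R c2" using c2a c2b by (blast, blast)
  have "((\<lambda>s. c1) \<longlongrightarrow> c1) (at_right t)" by (rule tendsto_const)
  moreover have "eventually (\<lambda>s. c1 = vel \<gamma> s) (at_right t)"
    using eventually_at_right_real[of t "t+d"] d(1) c1(1)
    by (auto elim!: eventually_mono)
  ultimately have "(vel \<gamma> \<longlongrightarrow> c1) (at_right t)" by (rule Lim_transform_eventually)
  hence e1: "vp = c1" using vp tendsto_unique trivial_limit_at_right_real by blast
  have "((\<lambda>s. c2) \<longlongrightarrow> c2) (at_left t)" by (rule tendsto_const)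
  moreover have "eventually (\<lambda>s. c2 = vel \<gamma> s) (at_left t)"
    using eventually_at_left_real[of "t-d" t] d(1) c2(1)
    by (auto elim!: eventually_mono)
  ultimately have "(vel \<gamma> \<longlongrightarrow> c2) (at_left t)" by (rule Lim_transform_eventually)
  hence e2: "vm = c2" using vm tendsto_unique trivial_limit_at_left_real by blast
  have "\<gamma> (t + u) = \<gamma> t + u *\<^sub>R vp \<and> \<gamma> (t - u) = \<gamma> t - u *\<^sub>R vm" if u: "0 \<le> u" "u \<le> d" for u
  proof
    show "\<gamma> (t + u) = \<gamma> t + u *\<^sub>R vp" using c1(2)[of "t+u"] u e1 by simp
    have a: "\<gamma> t = \<gamma> (t-d) + d *\<^sub>R c2" using c2(2)[of t] d(1) by simp
    have b: "\<gamma> (t - u) = \<gamma> (t-d) + (d - u) *\<^sub>R c2" using c2(2)[of "t-u"] u by simp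
    show "\<gamma> (t - u) = \<gamma> t - u *\<^sub>R vm" unfolding a b e2 by (simp add: algebra_simps)
  qed
  thus ?thesis using d(1) by blast
qed

lemma refl_sign:
  fixes K :: "'a::euclidean_space set" and \<gamma> :: "real \<Rightarrow> 'a"
  assumes cb: "convex_body K" and sb: "smooth_boundary K" and bt: "billiard_traj_with K \<gamma> B"
    and vp: "(vel \<gamma> \<longlongrightarrow> vp) (at_right t)" and vm: "(vel \<gamma> \<longlongrightarrow> vm) (at_left t)"
    and fr: "\<gamma> t \<in> frontier K"
    and tg: "vp + vm \<in> tangent_bd K (\<gamma> t)"
    and oc: "vp - vm \<in> orth_compl (tangent_bd K (\<gamma> t))" and nz: "vp - vm \<noteq> 0"
  shows "\<exists>l<0. vp - vm = l *\<^sub>R outer_normal K (\<gamma> t)"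
proof -
  define \<nu> where "\<nu> = outer_normal K (\<gamma> t)"
  have np: "norm \<nu> = 1" "\<And>y. y \<in> K \<Longrightarrow> y \<bullet> \<nu> \<le> \<gamma> t \<bullet> \<nu>"
    "\<And>w. w \<in> orth_compl (tangent_bd K (\<gamma> t)) \<Longrightarrow> w = (w \<bullet> \<nu>) *\<^sub>R \<nu>"
    "\<And>v. v \<in> tangent_bd K (\<gamma> t) \<Longrightarrow> v \<bullet> \<nu> = 0"
    using normal_props[OF cb sb fr] unfolding \<nu>_def by blast+
  have sum0: "vp \<bullet> \<nu> + vm \<bullet> \<nu> = 0" using np(4)[OF tg] by (simp add: inner_add_left)
  have eq: "vp - vm = ((vp - vm) \<bullet> \<nu>) *\<^sub>R \<nu>" by (rule np(3)[OF oc])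
  obtain e where e: "e > 0" "\<And>u. 0 \<le> u \<Longrightarrow> u \<le> e \<Longrightarrow> \<gamma> (t + u) = \<gamma> t + u *\<^sub>R vp \<and> \<gamma> (t - u) = \<gamma> t - u *\<^sub>R vm"
    using jump_local[OF bt vp vm] by blast
  have rg: "\<And>s. \<gamma> s \<in> K" using bt by (auto simp: billiard_traj_with_def)
  have "\<gamma> (t + e) \<bullet> \<nu> \<le> \<gamma> t \<bullet> \<nu>" by (rule np(2)[OF rg])
  hence "(\<gamma> t + e *\<^sub>R vp) \<bullet> \<nu> \<le> \<gamma> t \<bullet> \<nu>" using e by simp
  hence "e * (vp \<bullet> \<nu>) \<le> 0" by (simp add: inner_add_left)
  hence a: "vp \<bullet> \<nu> \<le> 0" using e(1) by (simp add: mult_le_0_iff)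
  define l where "l = (vp - vm) \<bullet> \<nu>"
  have l2: "l = 2 * (vp \<bullet> \<nu>)" using sum0 by (simp add: l_def inner_diff_left)
  have "l \<noteq> 0" using eq nz by (auto simp: l_def)
  hence "l < 0" using a l2 by simp
  thus ?thesis using eq by (auto simp: l_def \<nu>_def)
qed

lemma B_nonempty:
  fixes \<gamma> :: "real \<Rightarrow> 'a::euclidean_space"
  assumes bt: "billiard_traj_with K \<gamma> B"
  shows "B \<noteq> {}"
proof
  assume B: "B = {}"
  have p: "\<forall>t. \<gamma> (t + 1) = \<gamma> t" using bt by (simp add: billiard_traj_with_def)
  have "{0<..<1} \<inter> lift B = {}" using B by (simp add: lift_def)
  from lin_piece[OF bt _ this] obtain c where c: "\<forall>s\<in>{0..1}. \<gamma> s = \<gamma> 0 + (s - 0) *\<^sub>R c" by auto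
  have "\<gamma> 1 = \<gamma> 0" using p[rule_format, of 0] by simp
  moreover have "\<gamma> 1 = \<gamma> 0 + c" using c[rule_format, of 1] by simp
  ultimately have c0: "c = 0" by simp
  have "\<gamma> s = \<gamma> 0" for s
  proof -
    have "frac s \<in> {0..1}" using frac_lt_1[of s] by simp
    hence "\<gamma> (frac s) = \<gamma> 0" using c[rule_format, of "frac s"] c0 by simp
    thus ?thesis using per_frac[OF p, of s] by simp
  qed
  moreover obtain s t where "\<gamma> s \<noteq> \<gamma> t" using bt by (auto simp: billiard_traj_with_def)
  ultimately show False by metis
qed

lemma min_in_B:
  fixes \<gamma> :: "real \<Rightarrow> 'a::euclidean_space"
  assumes bt: "billiard_traj_with K \<gamma> B"
  shows "\<exists>b\<in>B. \<forall>s. a \<bullet> \<gamma> b \<le> a \<bullet> \<gamma> s"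
proof -
  define h where "h s = a \<bullet> \<gamma> s" for s
  have p: "\<forall>t. \<gamma> (t + 1) = \<gamma> t" using bt by (simp add: billiard_traj_with_def)
  have fB: "finite B" and B01: "B \<subseteq> {0..<1}" using bt by (simp_all add: billiard_traj_with_def)
  have cont: "continuous_on UNIV \<gamma>" using bt by (simp add: billiard_traj_with_def)
  have hc: "continuous_on {0..1} h" unfolding h_def
    by (intro continuous_intros continuous_on_subset[OF cont]) auto
  obtain s0 where s0: "s0 \<in> {0..1}" "\<And>y. y \<in> {0..1} \<Longrightarrow> h s0 \<le> h y"
    using continuous_attains_inf[OF compact_Icc _ hc] by auto
  have hper: "h s = h (frac s)" for s unfolding h_def using per_frac[OF p, of s] by simp
  have glob: "h s0 \<le> h s" for s
  proof -
    have "frac s \<in> {0..1}" using frac_lt_1[of s] by simp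
    hence "h s0 \<le> h (frac s)" by (rule s0(2))
    thus ?thesis using hper[of s] by simp
  qed
  have fracB: "frac t \<in> B" if "t \<in> lift B" for t using that by (simp add: lift_def)
  have "\<exists>t\<in>lift B. h t = h s0"
  proof (cases "s0 \<in> lift B")
    case True then show ?thesis by blast
  next
    case False
    obtain b0 where b0: "b0 \<in> B" using B_nonempty[OF bt] by blast
    have b01: "0 \<le> b0" "b0 < 1" using b0 B01 by auto
    define k where "k = \<lfloor>s0 - b0\<rfloor>"
    define x0 where "x0 = b0 + of_int k"
    have fx0: "frac x0 = b0" using b01 by (simp add: x0_def frac_eq)
    have x0L: "x0 \<in> lift B" using fx0 b0 by (simp add: lift_def)
    have fx1: "frac (x0 + 1) = b0"
    proof -
      have "frac (x0 + of_int 1) = frac x0" by (rule frac_add_of_int_right)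
      thus ?thesis using fx0 by simp
    qed
    have x1L: "x0 + 1 \<in> lift B" using fx1 b0 by (simp add: lift_def)
    have kle: "of_int k \<le> s0 - b0" "s0 - b0 < of_int k + 1" unfolding k_def
      by (rule of_int_floor_le, rule real_of_int_floor_add_one_gt)
    have x0s: "x0 \<le> s0" "s0 - 1 < x0" using kle by (simp_all add: x0_def)
    have "x0 \<noteq> s0" using x0L False by blast
    hence x0lt: "x0 < s0" using x0s by simp
    define F where "F = lift B \<inter> {s0-1..s0+1}"
    have fF: "finite F" unfolding F_def by (rule lift_fin[OF fB])
    define L where "L = F \<inter> {..<s0}"
    define R where "R = F \<inter> {s0<..}"
    have fL: "finite L" "finite R" using fF by (simp_all add: L_def R_def)
    have x0inL: "x0 \<in> L" using x0L x0lt x0s by (simp add: L_def F_def)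
    have x1inR: "x0 + 1 \<in> R" using x1L x0lt x0s by (simp add: R_def F_def)
    define t0 where "t0 = Max L"
    define t1 where "t1 = Min R"
    have t0L: "t0 \<in> L" unfolding t0_def using fL x0inL by (intro Max_in) auto
    have t1R: "t1 \<in> R" unfolding t1_def using fL x1inR by (intro Min_in) auto
    have t0b: "s0 - 1 \<le> t0" "t0 < s0" using t0L by (auto simp: L_def F_def)
    have t1b: "t1 \<le> s0 + 1" "s0 < t1" using t1R by (auto simp: R_def F_def)
    have gap: "{t0<..<t1} \<inter> lift B = {}"
    proof -
      have "s \<notin> lift B" if s: "s \<in> {t0<..<t1}" for s
      proof
        assume sL: "s \<in> lift B"
        hence sF: "s \<in> F" using s t0b t1b by (simp add: F_def)
        have "s \<noteq> s0" using sL False by blast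
        show False
        proof (cases "s < s0")
          case True
          hence "s \<in> L" using sF by (simp add: L_def)
          hence "s \<le> t0" unfolding t0_def using fL by (intro Max_ge) auto
          thus False using s by simp
        next
          case False
          hence "s \<in> R" using sF \<open>s \<noteq> s0\<close> by (simp add: R_def)
          hence "t1 \<le> s" unfolding t1_def using fL by (intro Min_le) auto
          thus False using s by simp
        qed
      qed
      thus ?thesis by blast
    qed
    have "t0 < t1" using t0b t1b by simp
    from lin_piece[OF bt this gap] obtain c where
      c: "\<forall>s\<in>{t0..t1}. \<gamma> s = \<gamma> t0 + (s - t0) *\<^sub>R c" by blast
    have hl: "h s = h t0 + (s - t0) * (a \<bullet> c)" if "s \<in> {t0..t1}" for s
      using c[rule_format, OF that] by (simp add: h_def inner_add_right)
    have hs0: "h s0 = h t0 + (s0 - t0) * (a \<bullet> c)" using t0b t1b by (intro hl) simp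
    moreover have ht1: "h t1 = h t0 + (t1 - t0) * (a \<bullet> c)" using t0b t1b by (intro hl) simp
    moreover have "h s0 \<le> h t0" "h s0 \<le> h t1" by (rule glob)+
    ultimately have "(s0 - t0) * (a \<bullet> c) \<le> 0" "(t1 - s0) * (a \<bullet> c) \<ge> 0"
      by (simp_all add: left_diff_distrib)
    hence "a \<bullet> c \<le> 0" "a \<bullet> c \<ge> 0" using t0b t1b by (simp_all add: mult_le_0_iff zero_le_mult_iff)
    hence "a \<bullet> c = 0" by simp
    hence "h t1 = h s0" using hs0 ht1 by simp
    moreover have "t1 \<in> lift B" using t1R by (simp add: R_def F_def)
    ultimately show ?thesis by blast
  qed
  then obtain t where t: "t \<in> lift B" "h t = h s0" by blast
  have "frac t \<in> B" by (rule fracB[OF t(1)])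
  moreover have "h (frac t) = h s0" using hper[of t] t(2) by simp
  ultimately show ?thesis using glob unfolding h_def by metis
qed

lemma zero_hull:
  fixes K :: "'a::euclidean_space set" and \<gamma> :: "real \<Rightarrow> 'a"
  assumes cb: "convex_body K" and sb: "smooth_boundary K" and bt: "billiard_traj_with K \<gamma> B"
  shows "(0::'a) \<in> convex hull ((\<lambda>t. outer_normal K (\<gamma> t)) ` B)"
proof (rule ccontr)
  define N where "N = (\<lambda>t. outer_normal K (\<gamma> t)) ` B"
  assume "(0::'a) \<notin> convex hull ((\<lambda>t. outer_normal K (\<gamma> t)) ` B)"
  hence n0: "(0::'a) \<notin> convex hull N" by (simp add: N_def)
  have fB: "finite B" using bt by (simp add: billiard_traj_with_def)
  hence "finite N" by (simp add: N_def)
  hence "compact (convex hull N)" by (intro compact_convex_hull finite_imp_compact)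
  hence "closed (convex hull N)" by (rule compact_imp_closed)
  then obtain a b where ab: "a \<noteq> 0" "0 < b" "\<forall>x\<in>convex hull N. inner a x > b"
    using separating_hyperplane_closed_0[OF convex_convex_hull _ n0] by blast
  have pos: "a \<bullet> outer_normal K (\<gamma> t) > 0" if "t \<in> B" for t
  proof -
    have "outer_normal K (\<gamma> t) \<in> convex hull N" using that by (intro hull_inc) (simp add: N_def)
    hence "a \<bullet> outer_normal K (\<gamma> t) > b" using ab(3) by blast
    thus ?thesis using ab(2) by simp
  qed
  obtain b0 where b0: "b0 \<in> B" "\<And>s. a \<bullet> \<gamma> b0 \<le> a \<bullet> \<gamma> s" using min_in_B[OF bt, of a] by blast
  from bt b0(1) obtain vp vm where vv: "(vel \<gamma> \<longlongrightarrow> vp) (at_right b0)" "(vel \<gamma> \<longlongrightarrow> vm) (at_left b0)"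
    "\<gamma> b0 \<in> frontier K" "vp + vm \<in> tangent_bd K (\<gamma> b0)"
    "vp - vm \<in> orth_compl (tangent_bd K (\<gamma> b0))" "vp - vm \<noteq> 0"
    unfolding billiard_traj_with_def by blast
  obtain l where l: "l < 0" "vp - vm = l *\<^sub>R outer_normal K (\<gamma> b0)"
    using refl_sign[OF cb sb bt vv] by blast
  have "a \<bullet> (vp - vm) = l * (a \<bullet> outer_normal K (\<gamma> b0))" using l(2) by simp
  also have "\<dots> < 0" using l(1) pos[OF b0(1)] by (simp add: mult_neg_pos)
  finally have neg: "a \<bullet> (vp - vm) < 0" .
  obtain e where e: "e > 0" "\<And>u. 0 \<le> u \<Longrightarrow> u \<le> e \<Longrightarrow> \<gamma> (b0 + u) = \<gamma> b0 + u *\<^sub>R vp \<and> \<gamma> (b0 - u) = \<gamma> b0 - u *\<^sub>R vm"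
    using jump_local[OF bt vv(1,2)] by blast
  have "a \<bullet> \<gamma> b0 \<le> a \<bullet> \<gamma> (b0 + e)" by (rule b0(2))
  hence "0 \<le> e * (a \<bullet> vp)" using e by (simp add: inner_add_right)
  hence p1: "0 \<le> a \<bullet> vp" using e(1) by (simp add: zero_le_mult_iff)
  have "a \<bullet> \<gamma> b0 \<le> a \<bullet> \<gamma> (b0 - e)" by (rule b0(2))
  hence "e * (a \<bullet> vm) \<le> 0" using e by (simp add: inner_diff_right)
  hence p2: "a \<bullet> vm \<le> 0" using e(1) by (simp add: mult_le_0_iff)
  have "a \<bullet> (vp - vm) \<ge> 0" using p1 p2 by (simp add: inner_diff_right)
  thus False using neg by simp
qed

lemma supp_claim:
  fixes K :: "'a::euclidean_space set" and \<gamma> :: "real \<Rightarrow> 'a"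
  assumes cb: "convex_body K" and sb: "smooth_boundary K" and bt: "billiard_traj_with K \<gamma> B"
    and t: "t \<in> B"
  shows "supp K (outer_normal K (\<gamma> t)) \<le> supp (\<gamma> ` UNIV) (outer_normal K (\<gamma> t))"
proof -
  define \<nu> where "\<nu> = outer_normal K (\<gamma> t)"
  have fr: "\<gamma> t \<in> frontier K" using bt t unfolding billiard_traj_with_def by blast
  have np: "norm \<nu> = 1" "\<And>y. y \<in> K \<Longrightarrow> y \<bullet> \<nu> \<le> \<gamma> t \<bullet> \<nu>"
    using normal_props[OF cb sb fr] unfolding \<nu>_def by blast+
  have rg: "\<gamma> ` UNIV \<subseteq> K" using bt by (simp add: billiard_traj_with_def)
  have "bounded K" using cb by (simp add: convex_body_def compact_imp_bounded)
  then obtain M where M: "\<And>x. x \<in> K \<Longrightarrow> norm x \<le> M" by (auto simp: bounded_iff)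
  have "supp K \<nu> \<le> \<gamma> t \<bullet> \<nu>"
    unfolding supp_def
  proof (rule cSup_least)
    show "(\<lambda>s. s \<bullet> \<nu>) ` K \<noteq> {}" using rg by auto
    fix x assume "x \<in> (\<lambda>s. s \<bullet> \<nu>) ` K"
    then obtain y where "y \<in> K" "x = y \<bullet> \<nu>" by blast
    thus "x \<le> \<gamma> t \<bullet> \<nu>" using np(2) by simp
  qed
  also have "\<gamma> t \<bullet> \<nu> \<le> supp (\<gamma> ` UNIV) \<nu>"
    unfolding supp_def
  proof (rule cSup_upper)
    show "\<gamma> t \<bullet> \<nu> \<in> (\<lambda>s. s \<bullet> \<nu>) ` \<gamma> ` UNIV" by blast
    have "s \<bullet> \<nu> \<le> M" if "s \<in> \<gamma> ` UNIV" for s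
    proof -
      have "s \<bullet> \<nu> \<le> norm s * norm \<nu>" by (rule norm_cauchy_schwarz)
      also have "\<dots> = norm s" using np(1) by simp
      also have "\<dots> \<le> M" using M rg that by blast
      finally show ?thesis .
    qed
    thus "bdd_above ((\<lambda>s. s \<bullet> \<nu>) ` \<gamma> ` UNIV)" by (intro bdd_aboveI) blast
  qed
  finally show ?thesis by (simp add: \<nu>_def)
qed

lemma pplus:
  fixes K :: "'a::euclidean_space set"
  assumes cb: "convex_body K" and sb: "smooth_boundary K"
  shows "billiard_trajs K \<subseteq> PPlus K"
proof
  fix \<gamma> :: "real \<Rightarrow> 'a" assume "\<gamma> \<in> billiard_trajs K"
  then obtain B where bt: "billiard_traj_with K \<gamma> B" by (auto simp: billiard_trajs_def)
  have pl: "piecewise_linear_closed \<gamma>"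
    unfolding piecewise_linear_closed_def
  proof (intro conjI)
    show "\<forall>t. \<gamma> (t + 1) = \<gamma> t" "continuous_on UNIV \<gamma>" using bt by (simp_all add: billiard_traj_with_def)
    have "\<exists>u v. \<forall>s\<in>{a..b}. \<gamma> s = u + s *\<^sub>R v" if ab: "a < b" "{a<..<b} \<inter> lift B = {}" for a b
    proof -
      from lin_piece[OF bt ab] obtain c where c: "\<forall>s\<in>{a..b}. \<gamma> s = \<gamma> a + (s - a) *\<^sub>R c" by blast
      have "\<forall>s\<in>{a..b}. \<gamma> s = (\<gamma> a - a *\<^sub>R c) + s *\<^sub>R c"
      proof
        fix s assume "s \<in> {a..b}"
        hence "\<gamma> s = \<gamma> a + (s - a) *\<^sub>R c" using c by blast
        thus "\<gamma> s = (\<gamma> a - a *\<^sub>R c) + s *\<^sub>R c" by (simp add: algebra_simps)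
      qed
      thus ?thesis by blast
    qed
    moreover have "finite B" "B \<subseteq> {0..<1}" using bt by (simp_all add: billiard_traj_with_def)
    ultimately show "\<exists>P. finite P \<and> P \<subseteq> {0..<1} \<and> (\<forall>a b. a < b \<and> {a<..<b} \<inter> lift P = {} \<longrightarrow>
           (\<exists>u v. \<forall>s\<in>{a..b}. \<gamma> s = u + s *\<^sub>R v))" by blast
  qed
  have "\<not> ((\<lambda>p. p + x) ` (\<gamma> ` UNIV) \<subseteq> interior K)" for x
  proof
    assume sub: "(\<lambda>p. p + x) ` (\<gamma> ` UNIV) \<subseteq> interior K"
    define N where "N = (\<lambda>t. outer_normal K (\<gamma> t)) ` B"
    have neg: "x \<bullet> \<nu> < 0" if "\<nu> \<in> N" for \<nu>
    proof -
      obtain t where t: "t \<in> B" "\<nu> = outer_normal K (\<gamma> t)" using \<open>\<nu> \<in> N\<close> by (auto simp: N_def)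
      have fr: "\<gamma> t \<in> frontier K" using bt t unfolding billiard_traj_with_def by blast
      have np: "norm \<nu> = 1" "\<And>y. y \<in> K \<Longrightarrow> y \<bullet> \<nu> \<le> \<gamma> t \<bullet> \<nu>"
        using normal_props[OF cb sb fr] unfolding t(2) by blast+
      have "\<gamma> t + x \<in> interior K" using sub by blast
      then obtain r where r: "r > 0" "ball (\<gamma> t + x) r \<subseteq> K" by (auto simp: mem_interior)
      have "\<gamma> t + x + (r/2) *\<^sub>R \<nu> \<in> ball (\<gamma> t + x) r" using r np(1) by (simp add: dist_norm)
      hence "\<gamma> t + x + (r/2) *\<^sub>R \<nu> \<in> K" using r by blast
      hence "(\<gamma> t + x + (r/2) *\<^sub>R \<nu>) \<bullet> \<nu> \<le> \<gamma> t \<bullet> \<nu>" by (rule np(2))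
      moreover have "\<nu> \<bullet> \<nu> = 1" using np(1) by (simp add: dot_square_norm)
      ultimately have "x \<bullet> \<nu> + r/2 \<le> 0" by (simp add: inner_add_left)
      thus ?thesis using r by simp
    qed
    have "convex hull N \<subseteq> {y. x \<bullet> y < 0}"
      by (rule hull_minimal) (use neg convex_halfspace_lt in auto)
    moreover have "(0::'a) \<in> convex hull N" using zero_hull[OF cb sb bt] by (simp add: N_def)
    ultimately show False by auto
  qed
  with pl show "\<gamma> \<in> PPlus K" by (simp add: PPlus_def)
qed

theorem lemma6p2:
  fixes K :: "'a::euclidean_space set" and \<gamma> :: "real \<Rightarrow> 'a" and B :: "real set"
  assumes "convex_body K" and "smooth_boundary K" and "billiard_traj_with K \<gamma> B"
  shows "(0::'a) \<in> convex hull ((\<lambda>t. outer_normal K (\<gamma> t)) ` B) \<and>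
         (\<forall>\<nu>\<in>(\<lambda>t. outer_normal K (\<gamma> t)) ` B. supp K \<nu> \<le> supp (\<gamma> ` UNIV) \<nu>) \<and>
         billiard_trajs K \<subseteq> PPlus K"
  using zero_hull[OF assms] supp_claim[OF assms] pplus[OF assms(1,2)] by blast

end
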